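(* Claimwise stability does not imply ex-post stability or fractional stability: there exist a set $N$ of $n$ agents and a set $O$ of $n$ objects with strict preferences $\succ_i$ over $O$ ($i\in N$) and strict priorities $\succ_o$ over $N$ ($o\in O$), and a random matching $p$, such that $p$ is claimwise stable but neither ex-post stable nor fractionally stable.
   Context: A random matching is an $n\times n$ bistochastic matrix $p=[p(i,o)]_{i\in N,o\in O}$ (nonnegative entries, every row and every column summing to $1$); it is deterministic if all entries lie in $\{0,1\}$. A deterministic matching $p$ is stable if there exist no $i,j\in N$, $o,o'\in O$ with $p(i,o')=1$, $p(j,o)=1$, $o\succ_i o'$, $i\succ_o j$. A random matching is ex-post stable if it can be written as $\sum_{j=1}^k\lambda_jP_j$ with each $P_j$ a stable deterministic matching, $\lambda_j\in(0,1]$, $\sum_j\lambda_j=1$. It is fractionally stable if for every $(i,o)\in N\times O$, $\sum_{o':o'\succ_i o}p(i,o')\ge\sum_{j:i\succ_o j}p(j,o)$. It is claimwise stable if for every $(i,o)\in N\times O$ and every $j\in N$ with $i\succ_o j$, $\sum_{o':o'\succ_i o}p(i,o')\ge p(j,o)$. *)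

theory Defs
  imports Complex_Main
begin

definition strict_order_on :: "'a set \<Rightarrow> ('a \<Rightarrow> 'a \<Rightarrow> bool) \<Rightarrow> bool" where
  "strict_order_on A R \<longleftrightarrow>
     (\<forall>x\<in>A. \<not> R x x) \<and>
     (\<forall>x\<in>A. \<forall>y\<in>A. \<forall>z\<in>A. R x y \<longrightarrow> R y z \<longrightarrow> R x z) \<and>
     (\<forall>x\<in>A. \<forall>y\<in>A. x \<noteq> y \<longrightarrow> R x y \<or> R y x)"

text \<open>pref i b b' : b \<succ>_i b' ;  prio b i j : i \<succ>_b j.\<close>
definition market :: "'n set \<Rightarrow> 'b set \<Rightarrow> ('n \<Rightarrow> 'b \<Rightarrow> 'b \<Rightarrow> bool) \<Rightarrow> ('b \<Rightarrow> 'n \<Rightarrow> 'n \<Rightarrow> bool) \<Rightarrow> bool" where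
  "market N Obj pref prio \<longleftrightarrow> finite N \<and> finite Obj \<and> card N = card Obj \<and>
     (\<forall>i\<in>N. strict_order_on Obj (pref i)) \<and> (\<forall>b\<in>Obj. strict_order_on N (prio b))"

definition random_matching :: "'n set \<Rightarrow> 'b set \<Rightarrow> ('n \<Rightarrow> 'b \<Rightarrow> real) \<Rightarrow> bool" where
  "random_matching N Obj p \<longleftrightarrow>
     (\<forall>i\<in>N. \<forall>b\<in>Obj. p i b \<ge> 0) \<and>
     (\<forall>i\<in>N. (\<Sum>b\<in>Obj. p i b) = 1) \<and>
     (\<forall>b\<in>Obj. (\<Sum>i\<in>N. p i b) = 1)"

definition deterministic :: "'n set \<Rightarrow> 'b set \<Rightarrow> ('n \<Rightarrow> 'b \<Rightarrow> real) \<Rightarrow> bool" where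
  "deterministic N Obj p \<longleftrightarrow> random_matching N Obj p \<and> (\<forall>i\<in>N. \<forall>b\<in>Obj. p i b = 0 \<or> p i b = 1)"

definition stable_det :: "'n set \<Rightarrow> 'b set \<Rightarrow> ('n \<Rightarrow> 'b \<Rightarrow> 'b \<Rightarrow> bool) \<Rightarrow> ('b \<Rightarrow> 'n \<Rightarrow> 'n \<Rightarrow> bool)
     \<Rightarrow> ('n \<Rightarrow> 'b \<Rightarrow> real) \<Rightarrow> bool" where
  "stable_det N Obj pref prio P \<longleftrightarrow> deterministic N Obj P \<and>
     \<not> (\<exists>i\<in>N. \<exists>j\<in>N. \<exists>b\<in>Obj. \<exists>b'\<in>Obj. P i b' = 1 \<and> P j b = 1 \<and> pref i b b' \<and> prio b i j)"

definition ex_post_stable :: "'n set \<Rightarrow> 'b set \<Rightarrow> ('n \<Rightarrow> 'b \<Rightarrow> 'b \<Rightarrow> bool) \<Rightarrow> ('b \<Rightarrow> 'n \<Rightarrow> 'n \<Rightarrow> bool)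
     \<Rightarrow> ('n \<Rightarrow> 'b \<Rightarrow> real) \<Rightarrow> bool" where
  "ex_post_stable N Obj pref prio p \<longleftrightarrow>
     (\<exists>(k::nat) (lam::nat \<Rightarrow> real) (Ps::nat \<Rightarrow> 'n \<Rightarrow> 'b \<Rightarrow> real).
        k \<ge> 1 \<and>
        (\<forall>j\<in>{1..k}. stable_det N Obj pref prio (Ps j) \<and> 0 < lam j \<and> lam j \<le> 1) \<and>
        (\<Sum>j=1..k. lam j) = 1 \<and>
        (\<forall>i\<in>N. \<forall>b\<in>Obj. p i b = (\<Sum>j=1..k. lam j * Ps j i b)))"

definition fractionally_stable :: "'n set \<Rightarrow> 'b set \<Rightarrow> ('n \<Rightarrow> 'b \<Rightarrow> 'b \<Rightarrow> bool) \<Rightarrow> ('b \<Rightarrow> 'n \<Rightarrow> 'n \<Rightarrow> bool)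
     \<Rightarrow> ('n \<Rightarrow> 'b \<Rightarrow> real) \<Rightarrow> bool" where
  "fractionally_stable N Obj pref prio p \<longleftrightarrow>
     (\<forall>i\<in>N. \<forall>b\<in>Obj. (\<Sum>b'\<in>{b'\<in>Obj. pref i b' b}. p i b') \<ge> (\<Sum>j\<in>{j\<in>N. prio b i j}. p j b))"

definition claimwise_stable :: "'n set \<Rightarrow> 'b set \<Rightarrow> ('n \<Rightarrow> 'b \<Rightarrow> 'b \<Rightarrow> bool) \<Rightarrow> ('b \<Rightarrow> 'n \<Rightarrow> 'n \<Rightarrow> bool)
     \<Rightarrow> ('n \<Rightarrow> 'b \<Rightarrow> real) \<Rightarrow> bool" where
  "claimwise_stable N Obj pref prio p \<longleftrightarrow>
     (\<forall>i\<in>N. \<forall>b\<in>Obj. \<forall>j\<in>N. prio b i j \<longrightarrow> (\<Sum>b'\<in>{b'\<in>Obj. pref i b' b}. p i b') \<ge> p j b)"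

end

theory Submission
  imports Defs
begin

lemma stable_det_frac:
  assumes fin: "finite N" and finO: "finite Obj" and so: "\<forall>b\<in>Obj. strict_order_on N (prio b)"
    and spref: "\<forall>i\<in>N. strict_order_on Obj (pref i)"
    and st: "stable_det N Obj pref prio P" and i: "i \<in> N" and b: "b \<in> Obj"
  shows "(\<Sum>j\<in>{j\<in>N. prio b i j}. P j b) \<le> (\<Sum>b'\<in>{b'\<in>Obj. pref i b' b}. P i b')"
proof -
  have det: "deterministic N Obj P" using st by (simp add: stable_det_def)
  have nb: "\<not> (\<exists>i\<in>N. \<exists>j\<in>N. \<exists>b\<in>Obj. \<exists>b'\<in>Obj. P i b' = 1 \<and> P j b = 1 \<and> pref i b b' \<and> prio b i j)"
    using st by (simp add: stable_det_def)
  have nn: "\<And>x y. x \<in> N \<Longrightarrow> y \<in> Obj \<Longrightarrow> P x y \<ge> 0" and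
    rows: "\<And>x. x \<in> N \<Longrightarrow> (\<Sum>y\<in>Obj. P x y) = 1" and
    cols: "\<And>y. y \<in> Obj \<Longrightarrow> (\<Sum>x\<in>N. P x y) = 1" and
    zo: "\<And>x y. x \<in> N \<Longrightarrow> y \<in> Obj \<Longrightarrow> P x y = 0 \<or> P x y = 1"
    using det by (auto simp: deterministic_def random_matching_def)
  have rnn: "0 \<le> (\<Sum>b'\<in>{b'\<in>Obj. pref i b' b}. P i b')"
    by (rule sum_nonneg) (use nn i in auto)
  show ?thesis
  proof (cases "\<exists>j\<in>N. prio b i j \<and> P j b = 1")
    case False
    then have "(\<Sum>j\<in>{j\<in>N. prio b i j}. P j b) = 0"
      by (intro sum.neutral) (use zo b in blast)
    with rnn show ?thesis by simp
  next
    case True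
    then obtain j where j: "j \<in> N" "prio b i j" "P j b = 1" by blast
    have ij: "i \<noteq> j" using j so b unfolding strict_order_on_def by blast
    have "(\<Sum>j\<in>{j\<in>N. prio b i j}. P j b) \<le> (\<Sum>x\<in>N. P x b)"
      by (rule sum_mono2) (use fin nn b in auto)
    then have L: "(\<Sum>j\<in>{j\<in>N. prio b i j}. P j b) \<le> 1" using cols b by simp
    have "\<exists>b'\<in>Obj. P i b' = 1"
    proof (rule ccontr)
      assume "\<not> ?thesis"
      then have "(\<Sum>y\<in>Obj. P i y) = 0" by (intro sum.neutral) (use zo i in blast)
      with rows i show False by simp
    qed
    then obtain b' where b': "b' \<in> Obj" "P i b' = 1" by blast
    have "b' \<noteq> b"
    proof
      assume "b' = b"
      then have "(\<Sum>x\<in>{i,j}. P x b) \<le> (\<Sum>x\<in>N. P x b)"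
        by (intro sum_mono2) (use fin nn b i j in auto)
      with \<open>b' = b\<close> b' j ij cols b show False by simp
    qed
    have "\<not> pref i b b'" using nb i j b b' by blast
    then have pb: "pref i b' b" using spref i b b' \<open>b' \<noteq> b\<close> unfolding strict_order_on_def by blast
    have "P i b' \<le> (\<Sum>b'\<in>{b'\<in>Obj. pref i b' b}. P i b')"
      by (rule member_le_sum) (use nn i b' pb finO in auto)
    hence "(1::real) \<le> (\<Sum>b'\<in>{b'\<in>Obj. pref i b' b}. P i b')" using b' by simp
    with L show ?thesis by linarith
  qed
qed

lemma expost_frac:
  assumes m: "market N Obj pref prio" and e: "ex_post_stable N Obj pref prio p"
  shows "fractionally_stable N Obj pref prio p"
proof -
  obtain k :: nat and lam :: "nat \<Rightarrow> real" and Ps :: "nat \<Rightarrow> 'a \<Rightarrow> 'b \<Rightarrow> real" where k: "k \<ge> 1" and sj: "\<forall>j\<in>{1..k}. stable_det N Obj pref prio (Ps j) \<and> 0 < lam j \<and> lam j \<le> 1"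
    and pe: "\<forall>i\<in>N. \<forall>b\<in>Obj. p i b = (\<Sum>j=1..k. lam j * Ps j i b)"
    using e unfolding ex_post_stable_def by (elim exE conjE) blast
  have fin: "finite N" "finite Obj" and so: "\<forall>b\<in>Obj. strict_order_on N (prio b)"
    and sp: "\<forall>i\<in>N. strict_order_on Obj (pref i)" using m by (auto simp: market_def)
  show ?thesis unfolding fractionally_stable_def
  proof (intro ballI)
    fix i b assume i: "i \<in> N" and b: "b \<in> Obj"
    have "(\<Sum>j\<in>{j\<in>N. prio b i j}. p j b) = (\<Sum>j\<in>{j\<in>N. prio b i j}. \<Sum>t=1..k. lam t * Ps t j b)"
      using pe b by (intro sum.cong) auto
    also have "\<dots> = (\<Sum>t=1..k. lam t * (\<Sum>j\<in>{j\<in>N. prio b i j}. Ps t j b))"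
      by (subst sum.swap) (simp add: sum_distrib_left)
    also have "\<dots> \<le> (\<Sum>t=1..k. lam t * (\<Sum>b'\<in>{b'\<in>Obj. pref i b' b}. Ps t i b'))"
    proof (rule sum_mono)
      fix t assume t: "t \<in> {1..k}"
      show "lam t * (\<Sum>j\<in>{j\<in>N. prio b i j}. Ps t j b) \<le> lam t * (\<Sum>b'\<in>{b'\<in>Obj. pref i b' b}. Ps t i b')"
        using stable_det_frac[OF fin(1) fin(2) so sp _ i b, of "Ps t"] sj t
        by (intro mult_left_mono) (auto intro: less_imp_le)
    qed
    also have "\<dots> = (\<Sum>b'\<in>{b'\<in>Obj. pref i b' b}. \<Sum>t=1..k. lam t * Ps t i b')"
      by (subst sum.swap) (simp add: sum_distrib_left)
    also have "\<dots> = (\<Sum>b'\<in>{b'\<in>Obj. pref i b' b}. p i b')"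
      using pe i by (intro sum.cong) auto
    finally show "(\<Sum>b'\<in>{b'\<in>Obj. pref i b' b}. p i b') \<ge> (\<Sum>j\<in>{j\<in>N. prio b i j}. p j b)" .
  qed
qed

definition rkp :: "nat \<Rightarrow> nat \<Rightarrow> nat" where
  "rkp i x = (if i = 2 then 2 - x else x)"
definition rko :: "nat \<Rightarrow> nat \<Rightarrow> nat" where
  "rko b x = (if b = 2 then x else (if x = 2 then 0 else x + 1))"
definition pm :: "nat \<Rightarrow> nat \<Rightarrow> real" where
  "pm i b = (if i = 0 then (if b = 0 then 2/3 else if b = 1 then 1/3 else 0)
             else if i = 1 then (if b = 0 then 0 else if b = 1 then 1/3 else 2/3)
             else 1/3)"

lemma sum_filter3: "(\<Sum>x\<in>{x\<in>{0,1,2::nat}. P x}. f x) =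
   (if P 0 then f 0 else 0) + (if P 1 then f 1 else 0) + (if P 2 then f 2 else 0)"
  by (subst sum.inter_filter) (simp_all add: add.assoc)

lemma ball3: "(\<forall>x\<in>{0,1,2::nat}. Q x) \<longleftrightarrow> Q 0 \<and> Q 1 \<and> Q 2" by auto

theorem proposition10:
  shows "\<exists>(N::nat set) (Obj::nat set) (pref::nat \<Rightarrow> nat \<Rightarrow> nat \<Rightarrow> bool) (prio::nat \<Rightarrow> nat \<Rightarrow> nat \<Rightarrow> bool)
           (p::nat \<Rightarrow> nat \<Rightarrow> real).
           market N Obj pref prio \<and> random_matching N Obj p \<and>
           claimwise_stable N Obj pref prio p \<and>
           \<not> ex_post_stable N Obj pref prio p \<and>
           \<not> fractionally_stable N Obj pref prio p"
proof -
  let ?N = "{0,1,2::nat}"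
  let ?pref = "\<lambda>i x y. rkp i x < rkp i y"
  let ?prio = "\<lambda>b x y. rko b x < rko b y"
  have m: "market ?N ?N ?pref ?prio"
    unfolding market_def strict_order_on_def ball3 by (simp add: rkp_def rko_def)
  have r: "random_matching ?N ?N pm"
    unfolding random_matching_def ball3 by (simp add: pm_def)
  have c: "claimwise_stable ?N ?N ?pref ?prio pm"
    unfolding claimwise_stable_def ball3 sum_filter3 by (simp add: pm_def rkp_def rko_def)
  have f: "\<not> fractionally_stable ?N ?N ?pref ?prio pm"
    unfolding fractionally_stable_def ball3 sum_filter3 by (simp add: pm_def rkp_def rko_def)
  have "\<not> ex_post_stable ?N ?N ?pref ?prio pm" using expost_frac[OF m] f by blast
  with m r c f show ?thesis by blast
qed

end
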